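(* Let $j\geq 2$ be an integer and let $T$ be a tree of order $n>10j$. If $\mu\neq 1$ is a Laplacian eigenvalue of $T$ with $m_T(\mu)=\lfloor \frac{n}{2}\rfloor - j$, then $\mu=\frac{3\pm\sqrt{5}}{2}$.
   Context: For a graph $G$, the Laplacian matrix is $L(G)=D(G)-A(G)$, with $D(G)$ the diagonal degree matrix and $A(G)$ the adjacency matrix; its eigenvalues are the Laplacian eigenvalues, and $m_G(\mu)$ denotes the multiplicity of $\mu$ as an eigenvalue of $L(G)$. *)

theory Defs
  imports "Jordan_Normal_Form.Char_Poly"
begin

definition simple_graph :: "nat \<Rightarrow> (nat \<Rightarrow> nat \<Rightarrow> bool) \<Rightarrow> bool" where
  "simple_graph n E \<longleftrightarrow>
     (\<forall>u v. E u v \<longrightarrow> u < n \<and> v < n) \<and>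
     (\<forall>u v. E u v \<longrightarrow> E v u) \<and>
     (\<forall>u. \<not> E u u)"

definition connected_graph :: "nat \<Rightarrow> (nat \<Rightarrow> nat \<Rightarrow> bool) \<Rightarrow> bool" where
  "connected_graph n E \<longleftrightarrow> (\<forall>u<n. \<forall>v<n. E\<^sup>*\<^sup>* u v)"

definition has_cycle :: "nat \<Rightarrow> (nat \<Rightarrow> nat \<Rightarrow> bool) \<Rightarrow> bool" where
  "has_cycle n E \<longleftrightarrow> (\<exists>vs. length vs \<ge> 3 \<and> distinct vs \<and> set vs \<subseteq> {0..<n} \<and>
      (\<forall>i. Suc i < length vs \<longrightarrow> E (vs ! i) (vs ! Suc i)) \<and> E (last vs) (hd vs))"

definition is_tree :: "nat \<Rightarrow> (nat \<Rightarrow> nat \<Rightarrow> bool) \<Rightarrow> bool" where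
  "is_tree n E \<longleftrightarrow> simple_graph n E \<and> connected_graph n E \<and> \<not> has_cycle n E"

definition degree :: "nat \<Rightarrow> (nat \<Rightarrow> nat \<Rightarrow> bool) \<Rightarrow> nat \<Rightarrow> nat" where
  "degree n E v = card {w \<in> {0..<n}. E v w}"

definition laplacian :: "nat \<Rightarrow> (nat \<Rightarrow> nat \<Rightarrow> bool) \<Rightarrow> real mat" where
  "laplacian n E = mat n n (\<lambda>(i, j). real (if i = j then degree n E i else 0))
                 - mat n n (\<lambda>(i, j). if E i j then 1 else 0)"

text \<open>Multiplicity of mu as a Laplacian eigenvalue (root multiplicity in the
  characteristic polynomial; equals geometric multiplicity since L is symmetric).\<close>
definition lap_mult :: "nat \<Rightarrow> (nat \<Rightarrow> nat \<Rightarrow> bool) \<Rightarrow> real \<Rightarrow> nat" where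
  "lap_mult n E \<mu> = order \<mu> (char_poly (laplacian n E))"

end

theory Submission
  imports Defs Jordan_Normal_Form.Jordan_Normal_Form_Uniqueness Jordan_Normal_Form.Jordan_Normal_Form_Existence Jordan_Normal_Form.DL_Rank
begin

lemma kernel_dim_le_card:
  fixes B :: "'a::field mat"
  assumes B: "B \<in> carrier_mat n n" and R: "R \<subseteq> {0..<n}"
  and force: "\<And>v. v \<in> carrier_vec n \<Longrightarrow> B *\<^sub>v v = 0\<^sub>v n \<Longrightarrow> (\<forall>i\<in>R. v$i = 0) \<Longrightarrow> v = 0\<^sub>v n"
  shows "kernel_dim B \<le> card R"
proof -
  interpret K: kernel n n B by (unfold_locales, rule B)
  obtain Bs where finBs: "finite Bs" and basis: "K.basis Bs" using kernel_basis_exists[OF B] by blast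
  have dimeq: "kernel_dim B = card Bs" using K.Ker.dim_basis[OF finBs basis] by simp
  have Bs_ker: "Bs \<subseteq> mat_kernel B" and indep: "\<not> K.lin_dep Bs"
    using basis unfolding K.Ker.basis_def by auto
  have indep2: "\<not> K.NC.lin_dep Bs" using indep K.lindep_same[OF Bs_ker] by simp
  show ?thesis
  proof (rule ccontr)
    assume "\<not> ?thesis"
    hence lt: "card R < card Bs" using dimeq by simp
    obtain bs where bs: "set bs = Bs" "distinct bs" using finite_distinct_list[OF finBs] by blast
    define d where "d = length bs"
    have d: "d = card Bs" using bs distinct_card unfolding d_def by metis
    have finR: "finite R" using R finite_subset by blast
    obtain rs where rs: "set rs = R" "distinct rs" using finite_distinct_list[OF finR] by blast
    define r where "r = length rs"
    have r: "r = card R" using rs distinct_card unfolding r_def by metis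
    have rd: "r < d" using lt r d by simp
    have bs_car: "set bs \<subseteq> carrier_vec n" using Bs_ker bs mat_kernel_carrier B
      by (auto simp: mat_kernel_def)
    define P where "P = mat_of_cols n bs"
    have P: "P \<in> carrier_mat n d" unfolding P_def d_def by simp
    have colsP: "cols P = bs" unfolding P_def using bs_car by simp
    define c where "c = (\<lambda>i. if i < r then row P (rs ! i) else 0\<^sub>v d)"
    define M where "M = mat\<^sub>r d d c"
    have M: "M \<in> carrier_mat d d" unfolding M_def by simp
    have eq: "(\<lambda>i. if i = r then 0\<^sub>v d else c i) = c" unfolding c_def by auto
    have cc: "c \<in> {0..<d} \<rightarrow> carrier_vec d" unfolding c_def using P by auto
    have "det M = 0" using det_row_0[OF rd cc] unfolding M_def eq .
    then obtain w where w: "w \<in> carrier_vec d" "w \<noteq> 0\<^sub>v d" "M *\<^sub>v w = 0\<^sub>v d"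
      using det_0_iff_vec_prod_zero_field[OF M] by blast
    define v where "v = P *\<^sub>v w"
    have v: "v \<in> carrier_vec n" unfolding v_def using P w by simp
    have BP: "B * P = 0\<^sub>m n d"
    proof (rule eq_matI)
      fix i j assume i: "i < dim_row (0\<^sub>m n d :: 'a mat)" and j: "j < dim_col (0\<^sub>m n d :: 'a mat)"
      have "col P j \<in> mat_kernel B" using j colsP bs P
        by (metis carrier_matD(2) cols_length cols_nth index_zero_mat(3) nth_mem subsetD Bs_ker)
      hence "B *\<^sub>v col P j = 0\<^sub>v n" using B mat_kernelD by blast
      hence "(B *\<^sub>v col P j) $ i = 0" using i by simp
      thus "(B * P) $$ (i, j) = 0\<^sub>m n d $$ (i, j)" using i j B P by simp
    qed (insert B P, auto)
    have z0: "0\<^sub>m n d *\<^sub>v w = 0\<^sub>v n" using w(1) by (intro eq_vecI) (auto simp: scalar_prod_def)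
    have Bv: "B *\<^sub>v v = 0\<^sub>v n" unfolding v_def
      using assoc_mult_mat_vec[OF B P w(1), symmetric] BP z0 by simp
    have vR: "\<forall>i\<in>R. v $ i = 0"
    proof
      fix k assume "k \<in> R"
      then obtain i where i: "i < r" "rs ! i = k" using rs r_def by (metis in_set_conv_nth)
      have kn: "k < n" using R \<open>k \<in> R\<close> by auto
      have r1: "(M *\<^sub>v w) $ i = row M i \<bullet> w" using M rd i by simp
      have r2: "row M i = row P k" unfolding M_def c_def using i rd P kn by auto
      have "row P k \<bullet> w = 0" using w(3) i rd r1 r2 by simp
      thus "v $ k = 0" unfolding v_def using kn P by simp
    qed
    have "v = 0\<^sub>v n" using force[OF v Bv vR] .
    hence "K.NC.lin_dep (set (cols P))"
      using K.NC.lin_depI[OF P w(1) w(2)] colsP bs v_def by simp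
    thus False using indep2 colsP bs by simp
  qed
qed

interpretation ofr_poly: map_poly_inj_idom_divide_hom "of_real :: real \<Rightarrow> complex" ..

lemma herm_sq_kernel:
  fixes C :: "complex mat"
  assumes C: "C \<in> carrier_mat n n"
    and sym: "\<And>i j. i < n \<Longrightarrow> j < n \<Longrightarrow> C $$ (i,j) = C $$ (j,i)"
    and re: "\<And>i j. i < n \<Longrightarrow> j < n \<Longrightarrow> cnj (C $$ (i,j)) = C $$ (i,j)"
    and v: "v \<in> carrier_vec n" and z: "C *\<^sub>v (C *\<^sub>v v) = 0\<^sub>v n"
  shows "C *\<^sub>v v = 0\<^sub>v n"
proof -
  define w where "w = C *\<^sub>v v"
  have w: "w \<in> carrier_vec n" unfolding w_def using C v by simp
  have wi: "\<And>i. i < n \<Longrightarrow> w $ i = (\<Sum>j=0..<n. C $$ (i,j) * v $ j)"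
    unfolding w_def using C v by (auto simp: scalar_prod_def)
  have Cw: "\<And>j. j < n \<Longrightarrow> (\<Sum>i=0..<n. C $$ (j,i) * w $ i) = 0"
  proof -
    fix j assume j: "j < n"
    have "(C *\<^sub>v w) $ j = 0" using z j unfolding w_def by simp
    thus "(\<Sum>i=0..<n. C $$ (j,i) * w $ i) = 0" using C w j by (auto simp: scalar_prod_def)
  qed
  have "(\<Sum>i=0..<n. w $ i * cnj (w $ i)) = (\<Sum>i=0..<n. (\<Sum>j=0..<n. C $$ (i,j) * v $ j) * cnj (w $ i))"
    using wi by simp
  also have "\<dots> = (\<Sum>i=0..<n. \<Sum>j=0..<n. v $ j * (C $$ (i,j) * cnj (w $ i)))"
    by (intro sum.cong refl) (simp add: sum_distrib_left sum_distrib_right mult_ac)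
  also have "\<dots> = (\<Sum>j=0..<n. \<Sum>i=0..<n. v $ j * (C $$ (i,j) * cnj (w $ i)))"
    by (rule sum.swap)
  also have "\<dots> = (\<Sum>j=0..<n. v $ j * cnj (\<Sum>i=0..<n. C $$ (j,i) * w $ i))"
  proof (rule sum.cong[OF refl])
    fix j assume j: "j \<in> {0..<n}"
    have a1: "(\<Sum>i=0..<n. v $ j * (C $$ (i,j) * cnj (w $ i))) = v $ j * (\<Sum>i=0..<n. C $$ (i,j) * cnj (w $ i))"
      by (simp add: sum_distrib_left)
    have a2: "(\<Sum>i=0..<n. C $$ (i,j) * cnj (w $ i)) = (\<Sum>i=0..<n. cnj (C $$ (j,i) * w $ i))"
      using j sym re by (intro sum.cong refl) auto
    have a3: "(\<Sum>i=0..<n. cnj (C $$ (j,i) * w $ i)) = cnj (\<Sum>i=0..<n. C $$ (j,i) * w $ i)" by simp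
    show "(\<Sum>i=0..<n. v $ j * (C $$ (i,j) * cnj (w $ i))) = v $ j * cnj (\<Sum>i=0..<n. C $$ (j,i) * w $ i)"
      unfolding a1 a2 a3 ..
  qed
  also have "\<dots> = 0" using Cw by simp
  finally have S0: "(\<Sum>i=0..<n. w $ i * cnj (w $ i)) = 0" .
  have eqz: "\<And>z::complex. z * cnj z = complex_of_real ((cmod z)^2)" using complex_norm_square by metis
  have "(\<Sum>i=0..<n. w $ i * cnj (w $ i)) = (\<Sum>i=0..<n. complex_of_real ((cmod (w $ i))\<^sup>2))"
    by (simp only: eqz)
  also have "\<dots> = complex_of_real (\<Sum>i=0..<n. (cmod (w $ i))\<^sup>2)" by (simp only: of_real_sum)
  finally have SS: "(\<Sum>i=0..<n. w $ i * cnj (w $ i)) = complex_of_real (\<Sum>i=0..<n. (cmod (w $ i))\<^sup>2)" .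
  have "(\<Sum>i=0..<n. (cmod (w $ i))\<^sup>2) = 0" using S0 SS of_real_eq_0_iff by metis
  hence "\<forall>i\<in>{0..<n}. (cmod (w $ i))\<^sup>2 = 0" by (subst sum_nonneg_eq_0_iff[symmetric]) auto
  hence "\<And>i. i < n \<Longrightarrow> w $ i = 0" by auto
  thus ?thesis unfolding w_def[symmetric] using w by (intro eq_vecI) auto
qed

lemma herm_pow_kernel:
  fixes C :: "complex mat"
  assumes C: "C \<in> carrier_mat n n"
    and sym: "\<And>i j. i < n \<Longrightarrow> j < n \<Longrightarrow> C $$ (i,j) = C $$ (j,i)"
    and re: "\<And>i j. i < n \<Longrightarrow> j < n \<Longrightarrow> cnj (C $$ (i,j)) = C $$ (i,j)"
  shows "v \<in> carrier_vec n \<Longrightarrow> (C ^\<^sub>m (Suc k)) *\<^sub>v v = 0\<^sub>v n \<Longrightarrow> C *\<^sub>v v = 0\<^sub>v n"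
proof (induction k arbitrary: v)
  case 0
  thus ?case using C by simp
next
  case (Suc k)
  have "C ^\<^sub>m Suc (Suc k) = C ^\<^sub>m (Suc k) * C" by simp
  hence "(C ^\<^sub>m (Suc k)) *\<^sub>v (C *\<^sub>v v) = 0\<^sub>v n"
    using Suc.prems C by (metis assoc_mult_mat_vec pow_carrier_mat)
  hence "C *\<^sub>v (C *\<^sub>v v) = 0\<^sub>v n" using Suc.IH C Suc.prems(1) by simp
  thus ?case using herm_sq_kernel[OF C sym re Suc.prems(1)] by simp
qed

lemma order_le_kernel_dim:
  fixes A :: "real mat"
  assumes A: "A \<in> carrier_mat n n" and sym: "\<And>i j. i<n \<Longrightarrow> j<n \<Longrightarrow> A$$(i,j) = A$$(j,i)"
  shows "Polynomial.order \<mu> (char_poly A) \<le> kernel_dim (char_matrix (map_mat complex_of_real A) (complex_of_real \<mu>))"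
proof -
  define Ac where "Ac = map_mat complex_of_real A"
  define mc where "mc = complex_of_real \<mu>"
  have Ac: "Ac \<in> carrier_mat n n" unfolding Ac_def using A by simp
  have ord: "Polynomial.order \<mu> (char_poly A) = Polynomial.order mc (char_poly Ac)"
    unfolding Ac_def mc_def of_real_hom.char_poly_hom[OF A] ofr_poly.order_hom ..
  obtain as where "char_poly Ac = (\<Prod>a\<leftarrow>as. [:- a, 1:])" using char_poly_factorized[OF Ac] by blast
  from jordan_nf_exists[OF Ac this] obtain n_as where jnf: "jordan_nf Ac n_as" by blast
  define k where "k = Polynomial.order mc (char_poly Ac)"
  define xs where "xs = map fst (filter (\<lambda>na. snd na = mc) n_as)"
  have k: "k = sum_list xs" unfolding k_def xs_def by (rule jordan_nf_order[OF jnf])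
  define C where "C = char_matrix Ac mc"
  have C: "C \<in> carrier_mat n n" unfolding C_def using Ac by simp
  have Cij: "\<And>i j. i < n \<Longrightarrow> j < n \<Longrightarrow> C $$ (i,j) = complex_of_real (A $$ (i,j) - (if i = j then \<mu> else 0))"
    unfolding C_def char_matrix_def Ac_def mc_def using A by auto
  have symC: "\<And>i j. i < n \<Longrightarrow> j < n \<Longrightarrow> C $$ (i,j) = C $$ (j,i)" using Cij sym by auto
  have reC: "\<And>i j. i < n \<Longrightarrow> j < n \<Longrightarrow> cnj (C $$ (i,j)) = C $$ (i,j)" using Cij by simp
  show ?thesis
  proof (cases k)
    case 0
    then show ?thesis using ord k_def by simp
  next
    case (Suc k')
    have dg0: "dim_gen_eigenspace Ac mc k = (\<Sum> n \<leftarrow> map fst [(n, e)\<leftarrow>n_as . e = mc]. min k n)"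
      by (rule dim_gen_eigenspace[OF jnf])
    have e1: "map fst [(n, e)\<leftarrow>n_as . e = mc] = xs" unfolding xs_def
      by (simp add: case_prod_beta')
    have e2: "map (min k) xs = xs"
    proof -
      have "\<forall>x\<in>set xs. x \<le> k" unfolding k using member_le_sum_list by blast
      thus ?thesis by (induct xs) auto
    qed
    have dg: "dim_gen_eigenspace Ac mc k = k" using dg0 e1 e2 k by simp
    have ker: "mat_kernel (C ^\<^sub>m k) = mat_kernel C"
    proof
      show "mat_kernel (C ^\<^sub>m k) \<subseteq> mat_kernel C"
      proof
        fix v assume vk: "v \<in> mat_kernel (C ^\<^sub>m k)"
        have Ck: "C ^\<^sub>m k \<in> carrier_mat n n" using C by simp
        have v: "v \<in> carrier_vec n" "(C ^\<^sub>m (Suc k')) *\<^sub>v v = 0\<^sub>v n"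
          using mat_kernelD[OF Ck vk] Suc by auto
        thus "v \<in> mat_kernel C" using herm_pow_kernel[OF C symC reC v] C by (intro mat_kernelI) auto
      qed
    next
      show "mat_kernel C \<subseteq> mat_kernel (C ^\<^sub>m k)"
      proof
        fix v assume "v \<in> mat_kernel C"
        hence v: "v \<in> carrier_vec n" "C *\<^sub>v v = 0\<^sub>v n" using C mat_kernelD[OF C] by auto
        have "\<And>m. (C ^\<^sub>m (Suc m)) *\<^sub>v v = 0\<^sub>v n"
        proof -
          fix m show "(C ^\<^sub>m (Suc m)) *\<^sub>v v = 0\<^sub>v n"
          proof (induct m)
            case 0 thus ?case using v C by simp
          next
            case (Suc m)
            have "(C ^\<^sub>m (Suc (Suc m))) *\<^sub>v v = (C ^\<^sub>m (Suc m) * C) *\<^sub>v v" by simp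
            also have "\<dots> = C ^\<^sub>m (Suc m) *\<^sub>v (C *\<^sub>v v)" using C v by (metis assoc_mult_mat_vec pow_carrier_mat)
            also have "\<dots> = C ^\<^sub>m (Suc m) *\<^sub>v 0\<^sub>v n" using v(2) by simp
            also have "\<dots> = 0\<^sub>v n" using C by (intro eq_vecI) (auto simp: scalar_prod_def)
            finally show ?case .
          qed
        qed
        thus "v \<in> mat_kernel (C ^\<^sub>m k)" using v Suc C by (intro mat_kernelI[of _ n n]) auto
      qed
    qed
    have "kernel_dim (C ^\<^sub>m k) = kernel_dim C"
      unfolding kernel_dim_def using C ker by simp
    hence "k = kernel_dim C" using dg unfolding dim_gen_eigenspace_def C_def by simp
    thus ?thesis using ord k_def C_def Ac_def mc_def by simp
  qed
qed

locale tree_ctx =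
  fixes n :: nat and E :: "nat \<Rightarrow> nat \<Rightarrow> bool"
  assumes tree: "is_tree n E" and npos: "0 < n"
begin

lemma E_lt: "E u v \<Longrightarrow> u < n \<and> v < n"
  using tree unfolding is_tree_def simple_graph_def by blast
lemma E_sym: "E u v \<Longrightarrow> E v u"
  using tree unfolding is_tree_def simple_graph_def by blast
lemma E_irr: "\<not> E u u"
  using tree unfolding is_tree_def simple_graph_def by blast
lemma conn: "u < n \<Longrightarrow> v < n \<Longrightarrow> E\<^sup>*\<^sup>* u v"
  using tree unfolding is_tree_def connected_graph_def by blast
lemma nocyc: "\<not> has_cycle n E"
  using tree unfolding is_tree_def by blast

definition d :: "nat \<Rightarrow> nat" where "d v = (LEAST k. (E ^^ k) 0 v)"

lemma d_path: "v < n \<Longrightarrow> (E ^^ d v) 0 v"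
proof -
  assume v: "v < n"
  from conn[OF npos v] obtain k where "(E ^^ k) 0 v" using rtranclp_power by metis
  thus ?thesis unfolding d_def by (rule LeastI)
qed

lemma d_le: "(E ^^ k) 0 v \<Longrightarrow> d v \<le> k"
  unfolding d_def by (rule Least_le)

lemma d0: "d 0 = 0"
  using d_le[of 0 0] by simp

lemma d_zero: "v < n \<Longrightarrow> d v = 0 \<Longrightarrow> v = 0"
  using d_path[of v] by simp

lemma d_edge: "E u v \<Longrightarrow> d v \<le> Suc (d u)"
proof -
  assume e: "E u v"
  hence "u < n" using E_lt by blast
  hence "(E ^^ Suc (d u)) 0 v" using d_path relpowp_Suc_I e by metis
  thus ?thesis by (rule d_le)
qed

lemma d_parent_ex: "v < n \<Longrightarrow> v \<noteq> 0 \<Longrightarrow> \<exists>w. E w v \<and> Suc (d w) = d v"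
proof -
  assume v: "v < n" "v \<noteq> 0"
  hence "d v \<noteq> 0" using d_zero by blast
  then obtain k where k: "d v = Suc k" by (cases "d v") auto
  have "(E ^^ Suc k) 0 v" using d_path[OF v(1)] k by simp
  then obtain w where w: "(E ^^ k) 0 w" "E w v" using relpowp_Suc_E by metis
  have "d w \<le> k" using d_le[OF w(1)] .
  moreover have "d v \<le> Suc (d w)" using d_edge[OF w(2)] .
  ultimately have "Suc (d w) = d v" using k by simp
  thus ?thesis using w(2) by blast
qed

definition p :: "nat \<Rightarrow> nat" where "p v = (SOME w. E w v \<and> Suc (d w) = d v)"

lemma p: "v < n \<Longrightarrow> v \<noteq> 0 \<Longrightarrow> E (p v) v \<and> Suc (d (p v)) = d v"
  unfolding p_def by (rule someI_ex, rule d_parent_ex)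

lemma p_lt: "v < n \<Longrightarrow> v \<noteq> 0 \<Longrightarrow> p v < n"
  using p E_lt by blast

lemma anc: "v < n \<Longrightarrow> k \<le> d v \<Longrightarrow> (p^^k) v < n \<and> d ((p^^k) v) = d v - k"
proof (induction k)
  case 0 thus ?case by simp
next
  case (Suc k)
  define x where "x = (p^^k) v"
  have x: "x < n" "d x = d v - k" using Suc unfolding x_def by auto
  have "x \<noteq> 0" using x Suc.prems d0 by (metis Suc_le_eq zero_less_diff less_numeral_extra(3))
  hence "p x < n" "Suc (d (p x)) = d x" using p[OF x(1)] p_lt[OF x(1)] by auto
  thus ?case using x unfolding x_def by simp
qed

lemma anc_root: "v < n \<Longrightarrow> (p^^(d v)) v = 0"
  using anc[of v "d v"] d_zero by simp

lemma anc_nz: "v < n \<Longrightarrow> k < d v \<Longrightarrow> (p^^k) v \<noteq> 0"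
proof
  assume v: "v < n" "k < d v" "(p^^k) v = 0"
  have "d ((p^^k) v) = d v - k" using anc[of v k] v by auto
  thus False using v d0 by simp
qed

lemma edge_tree:
  assumes e: "E a b"
  shows "(b \<noteq> 0 \<and> a = p b) \<or> (a \<noteq> 0 \<and> b = p a)"
proof (rule ccontr)
  assume neg: "\<not> ?thesis"
  have an: "a < n" and bn: "b < n" using E_lt e by auto
  define A where "A = (\<lambda>k. (p^^k) a)"
  define B where "B = (\<lambda>k. (p^^k) b)"
  have dA: "\<And>k. k \<le> d a \<Longrightarrow> A k < n \<and> d (A k) = d a - k" unfolding A_def using anc an by blast
  have dB: "\<And>k. k \<le> d b \<Longrightarrow> B k < n \<and> d (B k) = d b - k" unfolding B_def using anc bn by blast
  have nzA: "\<And>k. k < d a \<Longrightarrow> A k \<noteq> 0" unfolding A_def using anc_nz an by blast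
  have nzB: "\<And>k. k < d b \<Longrightarrow> B k \<noteq> 0" unfolding B_def using anc_nz bn by blast
  have sA: "\<And>k. A (Suc k) = p (A k)" unfolding A_def by simp
  have sB: "\<And>k. B (Suc k) = p (B k)" unfolding B_def by simp
  have ex: "\<exists>j\<le>d b. A (d a) = B j"
    using anc_root an bn unfolding A_def B_def by auto
  define i where "i = (LEAST i. \<exists>j\<le>d b. A i = B j)"
  have "\<exists>j\<le>d b. A i = B j" unfolding i_def by (rule LeastI_ex, use ex in blast)
  then obtain j where j: "j \<le> d b" "A i = B j" by blast
  have imin: "\<And>i' j'. i' < i \<Longrightarrow> j' \<le> d b \<Longrightarrow> A i' \<noteq> B j'"
    unfolding i_def using not_less_Least by blast
  have ia: "i \<le> d a" unfolding i_def by (rule Least_le, use ex in blast)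
  have pe: "\<And>x. x < n \<Longrightarrow> x \<noteq> 0 \<Longrightarrow> E (p x) x" using p by blast
  define f where "f = (\<lambda>k. if k \<le> i then A k else B (i + j - k))"
  define L where "L = Suc i + j"
  define vs where "vs = map f [0..<L]"
  have ij2: "2 \<le> i + j"
  proof (rule ccontr)
    assume "\<not> 2 \<le> i + j"
    hence "(i = 0 \<and> j = 0) \<or> (i = 0 \<and> j = 1) \<or> (i = 1 \<and> j = 0)" by auto
    moreover
    { assume "i = 0" "j = 0"
      hence "a = b" using j unfolding A_def B_def by simp
      hence False using e E_irr by simp }
    moreover
    { assume h: "i = 0" "j = 1"
      hence "a = p b" using j unfolding A_def B_def by simp
      moreover have "b \<noteq> 0"
      proof
        assume "b = 0" hence "d b = 0" using d0 by simp
        thus False using h j by simp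
      qed
      ultimately have False using neg by blast }
    moreover
    { assume h: "i = 1" "j = 0"
      hence "b = p a" using j unfolding A_def B_def by simp
      moreover have "a \<noteq> 0"
      proof
        assume "a = 0" hence "d a = 0" using d0 by simp
        thus False using h ia by simp
      qed
      ultimately have False using neg by blast }
    ultimately show False by blast
  qed
  have f_lt: "\<And>k. k < L \<Longrightarrow> f k < n"
    unfolding f_def L_def using dA dB ia j by auto
  have df1: "\<And>k. k \<le> i \<Longrightarrow> d (f k) = d a - k" unfolding f_def using dA ia by auto
  have df2: "\<And>k. i < k \<Longrightarrow> k < L \<Longrightarrow> d (f k) = d b - (i + j - k)"
    unfolding f_def L_def using dB j by auto
  have inj: "inj_on f {0..<L}"
  proof (rule inj_onI)
    fix k1 k2 assume k1: "k1 \<in> {0..<L}" and k2: "k2 \<in> {0..<L}" and fe: "f k1 = f k2"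
    { fix k1 k2 assume k1: "k1 < L" and k2: "k2 < L" and fe: "f k1 = f k2" and le1: "k1 \<le> i" and gt2: "i < k2"
      have e1: "f k1 = A k1" using le1 unfolding f_def by simp
      have e2: "f k2 = B (i + j - k2)" using gt2 unfolding f_def by simp
      have m: "i + j - k2 < j" using gt2 k2 unfolding L_def by simp
      have False
      proof (cases "k1 < i")
        case True
        thus False using imin[of k1 "i + j - k2"] m j fe e1 e2 by simp
      next
        case False
        hence "k1 = i" using le1 by simp
        hence "B j = B (i + j - k2)" using fe e1 e2 j by simp
        hence "d b - j = d b - (i + j - k2)" using dB j m by (metis less_imp_le order.trans)
        thus False using m j by simp
      qed }
    note mixed = this
    show "k1 = k2"
    proof (cases "k1 \<le> i")
      case True
      show ?thesis
      proof (cases "k2 \<le> i")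
        case True
        have "d a - k1 = d a - k2" using df1 \<open>k1 \<le> i\<close> True fe by metis
        thus ?thesis using ia \<open>k1 \<le> i\<close> True by simp
      next
        case False
        thus ?thesis using mixed[of k1 k2] k1 k2 fe \<open>k1 \<le> i\<close> by simp
      qed
    next
      case False
      show ?thesis
      proof (cases "k2 \<le> i")
        case True
        thus ?thesis using mixed[of k2 k1] k1 k2 fe False by simp
      next
        case False2: False
        have "d b - (i + j - k1) = d b - (i + j - k2)" using df2 k1 k2 False False2 fe by (metis atLeastLessThan_iff not_le)
        thus ?thesis using k1 k2 False False2 j unfolding L_def by simp
      qed
    qed
  qed
  have adj: "\<And>k. Suc k < L \<Longrightarrow> E (f k) (f (Suc k))"
  proof -
    fix k assume k: "Suc k < L"
    show "E (f k) (f (Suc k))"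
    proof (cases "k < i")
      case True
      have "f k = A k" "f (Suc k) = p (A k)" unfolding f_def using True sA by auto
      moreover have "A k < n" "A k \<noteq> 0" using dA nzA True ia by auto
      ultimately show ?thesis using pe E_sym by metis
    next
      case False
      show ?thesis
      proof (cases "k = i")
        case True
        have j1: "1 \<le> j" using k True unfolding L_def by simp
        have "f k = B j" using True j unfolding f_def by simp
        moreover have "f (Suc k) = B (j - 1)" using True unfolding f_def by simp
        moreover have "B j = p (B (j - 1))" using sB[of "j-1"] j1 by simp
        moreover have "B (j - 1) < n" "B (j - 1) \<noteq> 0" using dB nzB j j1 by auto
        ultimately show ?thesis using pe by metis
      next
        case False2: False
        define m where "m = i + j - Suc k"
        have km: "i + j - k = Suc m" using k False False2 unfolding m_def L_def by simp
        have mj: "m < j" using False False2 k unfolding m_def L_def by simp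
        have "f k = B (Suc m)" using False False2 km unfolding f_def by simp
        moreover have "f (Suc k) = B m" using False False2 unfolding f_def m_def by simp
        moreover have "B m < n" "B m \<noteq> 0" using dB nzB j mj by auto
        ultimately show ?thesis using pe sB by metis
      qed
    qed
  qed
  have "has_cycle n E"
    unfolding has_cycle_def
  proof (intro exI conjI allI impI)
    show "3 \<le> length vs" unfolding vs_def L_def using ij2 by simp
    show "distinct vs" unfolding vs_def using inj by (simp add: distinct_map)
    show "set vs \<subseteq> {0..<n}" unfolding vs_def using f_lt by auto
    fix k assume "Suc k < length vs"
    hence k: "Suc k < L" unfolding vs_def by simp
    thus "E (vs ! k) (vs ! Suc k)" unfolding vs_def using adj by simp
  next
    have L0: "0 < L" unfolding L_def by simp
    have "hd vs = f 0" unfolding vs_def using L0 by (simp add: hd_map)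
    hence h: "hd vs = a" unfolding f_def A_def by simp
    have "last vs = f (L - 1)" unfolding vs_def using L0 by (simp add: last_map)
    moreover have "f (L - 1) = b" using j unfolding f_def L_def B_def A_def by auto
    ultimately show "E (last vs) (hd vs)" using h e E_sym by simp
  qed
  thus False using nocyc by simp
qed

end

context tree_ctx begin

definition ch :: "nat \<Rightarrow> nat set" where "ch u = {w. w < n \<and> w \<noteq> 0 \<and> p w = u}"
definition N :: "nat \<Rightarrow> nat set" where "N u = {j. j < n \<and> E u j}"

lemma ch_fin: "finite (ch u)" unfolding ch_def by auto
lemma N_fin: "finite (N u)" unfolding N_def by auto

lemma pp_not: "u < n \<Longrightarrow> u \<noteq> 0 \<Longrightarrow> p u \<notin> ch u"
proof
  assume u: "u < n" "u \<noteq> 0" and pc: "p u \<in> ch u"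
  hence "p u < n" "p u \<noteq> 0" "p (p u) = u" unfolding ch_def by auto
  hence "Suc (d u) = d (p u)" using p by metis
  moreover have "Suc (d (p u)) = d u" using p u by blast
  ultimately show False by simp
qed

lemma N_eq: "u < n \<Longrightarrow> N u = (if u = 0 then {} else {p u}) \<union> ch u"
proof
  assume u: "u < n"
  show "N u \<subseteq> (if u = 0 then {} else {p u}) \<union> ch u"
  proof
    fix j assume "j \<in> N u"
    hence j: "j < n" "E u j" unfolding N_def by auto
    from edge_tree[OF j(2)] show "j \<in> (if u = 0 then {} else {p u}) \<union> ch u"
      using j unfolding ch_def by auto
  qed
  show "(if u = 0 then {} else {p u}) \<union> ch u \<subseteq> N u"
  proof
    fix j assume j: "j \<in> (if u = 0 then {} else {p u}) \<union> ch u"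
    show "j \<in> N u"
    proof (cases "j \<in> ch u")
      case True
      hence "j < n" "j \<noteq> 0" "p j = u" unfolding ch_def by auto
      thus ?thesis using p unfolding N_def by blast
    next
      case False
      hence "u \<noteq> 0" "j = p u" using j by (auto split: if_splits)
      thus ?thesis using p[OF u] p_lt[OF u] E_sym unfolding N_def by blast
    qed
  qed
qed

lemma sumN: "u < n \<Longrightarrow> (\<Sum>j\<in>N u. v j) = (if u = 0 then 0 else v (p u)) + (\<Sum>j\<in>ch u. v j)"
  using N_eq[of u] pp_not[of u] ch_fin[of u] by (auto simp: sum.insert)

lemma cardN: "u < n \<Longrightarrow> card (N u) = (if u = 0 then 0 else 1) + card (ch u)"
  using N_eq[of u] pp_not[of u] ch_fin[of u] by (auto simp: card_insert_if)

definition leafv :: "nat \<Rightarrow> bool" where "leafv w \<longleftrightarrow> ch w = {}"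
definition p2 :: "nat \<Rightarrow> bool" where "p2 w \<longleftrightarrow> (\<exists>g. ch w = {g} \<and> ch g = {})"
definition light :: "nat \<Rightarrow> bool" where "light w \<longleftrightarrow> leafv w \<or> p2 w"
definition heavy :: "nat \<Rightarrow> bool" where "heavy w \<longleftrightarrow> w < n \<and> w \<noteq> 0 \<and> \<not> light w"
definition Hv :: "nat set" where "Hv = {w. heavy w}"
definition K :: "nat set" where "K = {u. u < n \<and> (\<exists>w\<in>ch u. heavy w)}"
definition pick :: "nat \<Rightarrow> nat" where "pick u = (SOME w. w \<in> ch u \<and> heavy w)"
definition R :: "nat set" where "R = insert 0 (Hv - pick ` K)"

lemma pick: "u \<in> K \<Longrightarrow> pick u \<in> ch u \<and> heavy (pick u)"
  unfolding pick_def K_def by (rule someI_ex) auto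

lemma light_zero:
  fixes v :: "nat \<Rightarrow> complex" and mu :: complex
  assumes eq: "\<And>u. u < n \<Longrightarrow> of_nat (card (N u)) * v u - (\<Sum>j\<in>N u. v j) = mu * v u"
    and m1: "mu \<noteq> 1" and m2: "mu^2 - 3*mu + 1 \<noteq> 0"
    and c: "c < n" "c \<noteq> 0" "light c" and vp: "v (p c) = 0"
  shows "v c = 0"
proof (cases "leafv c")
  case True
  hence "ch c = {}" unfolding leafv_def .
  hence "card (N c) = 1" "(\<Sum>j\<in>N c. v j) = v (p c)" using cardN[OF c(1)] sumN[OF c(1)] c by auto
  hence "v c - v (p c) = mu * v c" using eq[OF c(1)] by simp
  hence "(1 - mu) * v c = 0" using vp by (simp add: algebra_simps)
  thus ?thesis using m1 by simp
next
  case False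
  hence "p2 c" using c unfolding light_def by simp
  then obtain g where g: "ch c = {g}" "ch g = {}" unfolding p2_def by blast
  have gc: "g < n" "g \<noteq> 0" "p g = c" using g(1) unfolding ch_def by auto
  have "card (N g) = 1" "(\<Sum>j\<in>N g. v j) = v c" using cardN[OF gc(1)] sumN[OF gc(1)] gc g(2) by auto
  hence eg: "v g - v c = mu * v g" using eq[OF gc(1)] by simp
  have "card (N c) = 2" "(\<Sum>j\<in>N c. v j) = v (p c) + v g" using cardN[OF c(1)] sumN[OF c(1)] c g(1) by auto
  hence ec: "2 * v c - (v (p c) + v g) = mu * v c" using eq[OF c(1)] by simp
  have vc: "v c = (1 - mu) * v g" using eg by (simp add: algebra_simps)
  have "2 * ((1 - mu) * v g) - v g = mu * ((1 - mu) * v g)" using ec vc vp by simp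
  hence "(mu^2 - 3*mu + 1) * v g = 0" by (simp add: algebra_simps power2_eq_square)
  hence "v g = 0" using m2 by simp
  thus ?thesis using vc by simp
qed

lemma forcing:
  fixes v :: "nat \<Rightarrow> complex" and mu :: complex
  assumes eq: "\<And>u. u < n \<Longrightarrow> of_nat (card (N u)) * v u - (\<Sum>j\<in>N u. v j) = mu * v u"
    and m1: "mu \<noteq> 1" and m2: "mu^2 - 3*mu + 1 \<noteq> 0"
    and vR: "\<And>i. i \<in> R \<Longrightarrow> v i = 0"
  shows "x < n \<Longrightarrow> v x = 0"
proof -
  have "\<forall>x<n. d x \<le> k \<longrightarrow> v x = 0" for k
  proof (induction k)
    case 0
    show ?case using d_zero vR unfolding R_def by auto
  next
    case (Suc k)
    show ?case
    proof (intro allI impI)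
      fix x assume x: "x < n" "d x \<le> Suc k"
      show "v x = 0"
      proof (cases "d x \<le> k")
        case True thus ?thesis using Suc.IH x by blast
      next
        case False
        hence dx: "d x = Suc k" using x by simp
        hence x0: "x \<noteq> 0" using d0 by (metis Zero_not_Suc)
        define u where "u = p x"
        have u: "u < n" "d u = k" using p[OF x(1) x0] p_lt[OF x(1) x0] dx unfolding u_def by auto
        have vu: "v u = 0" using Suc.IH u by simp
        have xch: "x \<in> ch u" unfolding ch_def u_def using x x0 by simp
        have vpu: "(if u = 0 then 0 else v (p u)) = 0"
        proof (cases "u = 0")
          case False
          hence "d (p u) < k" using p[OF u(1)] u by auto
          thus ?thesis using Suc.IH p_lt[OF u(1) False] False by simp
        qed simp
        have "(\<Sum>j\<in>N u. v j) = 0" using eq[OF u(1)] vu by simp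
        hence S: "(\<Sum>j\<in>ch u. v j) = 0" using sumN[OF u(1), of v] vpu by simp
        have lz: "\<And>w. w \<in> ch u \<Longrightarrow> light w \<Longrightarrow> v w = 0"
        proof -
          fix w assume w: "w \<in> ch u" "light w"
          hence "w < n" "w \<noteq> 0" "p w = u" unfolding ch_def by auto
          thus "v w = 0" using light_zero[OF eq m1 m2] w vu by auto
        qed
        show ?thesis
        proof (cases "light x")
          case True thus ?thesis using lz xch by blast
        next
          case False
          hence hx: "heavy x" unfolding heavy_def using x x0 by simp
          show ?thesis
          proof (cases "x \<in> R")
            case True thus ?thesis using vR by blast
          next
            case False
            hence "x \<in> pick ` K" using hx unfolding R_def Hv_def by auto
            then obtain u' where u': "u' \<in> K" "x = pick u'" by blast
            hence "x \<in> ch u'" using pick by blast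
            hence "u' = u" unfolding ch_def u_def by simp
            hence xp: "x = pick u" using u' by simp
            have uK: "u \<in> K" using u' \<open>u' = u\<close> by simp
            have others: "\<And>w. w \<in> ch u - {x} \<Longrightarrow> v w = 0"
            proof -
              fix w assume w: "w \<in> ch u - {x}"
              show "v w = 0"
              proof (cases "light w")
                case True thus ?thesis using lz w by blast
              next
                case False
                hence hw: "heavy w" using w unfolding heavy_def ch_def by auto
                have "w \<notin> pick ` K"
                proof
                  assume "w \<in> pick ` K"
                  then obtain u'' where u'': "u'' \<in> K" "w = pick u''" by blast
                  hence "w \<in> ch u''" using pick by blast
                  hence "u'' = u" using w unfolding ch_def by auto
                  thus False using u'' xp w by simp
                qed
                hence "w \<in> R" using hw unfolding R_def Hv_def by auto
                thus ?thesis using vR by blast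
              qed
            qed
            have sr: "(\<Sum>j\<in>ch u. v j) = v x + (\<Sum>j\<in>ch u - {x}. v j)"
              using xch ch_fin by (simp add: sum.remove)
            have s0: "(\<Sum>j\<in>ch u - {x}. v j) = 0" using others by simp
            show ?thesis using S sr s0 by simp
          qed
        qed
      qed
    qed
  qed
  thus "x < n \<Longrightarrow> v x = 0" by blast
qed

end

context tree_ctx begin

definition Z :: "nat set" where "Z = {z. heavy z \<and> (\<forall>c\<in>ch z. \<not> heavy c)}"

lemma Hv_fin: "finite Hv" unfolding Hv_def heavy_def by auto
lemma Z_fin: "finite Z" unfolding Z_def heavy_def by auto
lemma K_fin: "finite K" unfolding K_def by auto

lemma card_R: "card R \<le> Suc (card Z)"
proof -
  have sub: "pick ` K \<subseteq> Hv" using pick unfolding Hv_def by auto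
  have inj: "inj_on pick K"
  proof (rule inj_onI)
    fix x y assume "x \<in> K" "y \<in> K" "pick x = pick y"
    thus "x = y" using pick[of x] pick[of y] unfolding ch_def by auto
  qed
  have c1: "card (pick ` K) = card K" using card_image[OF inj] .
  have c2: "card (Hv - pick ` K) = card Hv - card K"
    using card_Diff_subset[OF finite_subset[OF sub Hv_fin] sub] c1 by simp
  have "Hv \<subseteq> Z \<union> K" unfolding Hv_def Z_def K_def heavy_def by auto
  hence "card Hv \<le> card (Z \<union> K)" using card_mono Z_fin K_fin by blast
  also have "\<dots> \<le> card Z + card K" by (rule card_Un_le)
  finally have c3: "card Hv - card K \<le> card Z" by simp
  have "card R \<le> Suc (card (Hv - pick ` K))"
    unfolding R_def using Hv_fin by (simp add: card_insert_if)
  thus ?thesis using c2 c3 by simp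
qed

definition f1 :: "nat \<Rightarrow> nat" where "f1 z = (SOME c. c \<in> ch z)"
definition f2 :: "nat \<Rightarrow> nat" where
  "f2 z = (if \<exists>c\<in>ch z. c \<noteq> f1 z then (SOME c. c \<in> ch z \<and> c \<noteq> f1 z) else (SOME g. g \<in> ch (f1 z)))"

lemma fprops:
  assumes z: "z \<in> Z"
  shows "f1 z \<in> ch z" "\<not> heavy (f1 z)" "\<not> heavy (f2 z)" "f2 z < n" "f2 z \<noteq> 0"
    "(f2 z \<in> ch z \<and> f2 z \<noteq> f1 z) \<or> (f2 z \<in> ch (f1 z))"
proof -
  have hz: "heavy z" and nc: "\<And>c. c \<in> ch z \<Longrightarrow> \<not> heavy c" using z unfolding Z_def by auto
  hence zl: "\<not> leafv z" "\<not> p2 z" unfolding heavy_def light_def by auto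
  hence "ch z \<noteq> {}" unfolding leafv_def by simp
  thus f1: "f1 z \<in> ch z" unfolding f1_def by (simp add: some_in_eq)
  thus nh1: "\<not> heavy (f1 z)" using nc by blast
  have "(f2 z \<in> ch z \<and> f2 z \<noteq> f1 z) \<or> (f2 z \<in> ch (f1 z) \<and> ch (f2 z) = {})"
  proof (cases "\<exists>c\<in>ch z. c \<noteq> f1 z")
    case True
    hence f2eq: "f2 z = (SOME c. c \<in> ch z \<and> c \<noteq> f1 z)" unfolding f2_def by simp
    have s: "(SOME c. c \<in> ch z \<and> c \<noteq> f1 z) \<in> ch z \<and> (SOME c. c \<in> ch z \<and> c \<noteq> f1 z) \<noteq> f1 z"
    proof -
      from True obtain c where "c \<in> ch z \<and> c \<noteq> f1 z" by blast
      thus ?thesis by (rule someI[where P = "\<lambda>c. c \<in> ch z \<and> c \<noteq> f1 z"])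
    qed
    show ?thesis unfolding f2eq using s by (rule disjI1)
  next
    case False
    have chz: "ch z = {f1 z}"
    proof
      show "ch z \<subseteq> {f1 z}" using False by blast
      show "{f1 z} \<subseteq> ch z" using f1 by blast
    qed
    have f1n: "f1 z < n" "f1 z \<noteq> 0" using f1 unfolding ch_def by auto
    hence "light (f1 z)" using nh1 unfolding heavy_def by simp
    moreover have "\<not> leafv (f1 z)" using zl(2) chz unfolding p2_def leafv_def by blast
    ultimately have "p2 (f1 z)" unfolding light_def by simp
    then obtain g where g: "ch (f1 z) = {g}" "ch g = {}" unfolding p2_def by blast
    have "f2 z = (SOME g. g \<in> ch (f1 z))" using False unfolding f2_def by simp
    also have "\<dots> = g" using g by simp
    finally show ?thesis using g by simp
  qed
  thus "(f2 z \<in> ch z \<and> f2 z \<noteq> f1 z) \<or> (f2 z \<in> ch (f1 z))" by blast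
  show "f2 z < n" "f2 z \<noteq> 0" using \<open>(f2 z \<in> ch z \<and> f2 z \<noteq> f1 z) \<or> (f2 z \<in> ch (f1 z) \<and> ch (f2 z) = {})\<close>
    unfolding ch_def by auto
  from \<open>(f2 z \<in> ch z \<and> f2 z \<noteq> f1 z) \<or> (f2 z \<in> ch (f1 z) \<and> ch (f2 z) = {})\<close>
  show "\<not> heavy (f2 z)"
  proof
    assume "f2 z \<in> ch z \<and> f2 z \<noteq> f1 z" thus ?thesis using nc by blast
  next
    assume "f2 z \<in> ch (f1 z) \<and> ch (f2 z) = {}"
    hence "leafv (f2 z)" unfolding leafv_def by simp
    thus ?thesis unfolding heavy_def light_def by simp
  qed
qed

end

context tree_ctx begin
lemma pf1: "z \<in> Z \<Longrightarrow> p (f1 z) = z" using fprops(1) unfolding ch_def by auto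
lemma hZ: "z \<in> Z \<Longrightarrow> heavy z" unfolding Z_def by auto
lemma inj1: "inj_on f1 Z" by (rule inj_onI) (metis pf1)
lemma pf2: assumes y: "y \<in> Z" shows "(p (f2 y) = y) \<or> (p (f2 y) = f1 y)"
proof -
  from fprops(6)[OF y] show ?thesis
  proof
    assume "f2 y \<in> ch y \<and> f2 y \<noteq> f1 y" thus ?thesis unfolding ch_def by simp
  next
    assume "f2 y \<in> ch (f1 y)" thus ?thesis unfolding ch_def by simp
  qed
qed

end

context tree_ctx begin
lemma inj2: "inj_on f2 Z"
proof (rule inj_onI)
  fix z z' assume z: "z \<in> Z" and z': "z' \<in> Z" and eq: "f2 z = f2 z'"
  show "z = z'"
  proof (cases "p (f2 z) = z")
    case True
    show ?thesis
    proof (cases "p (f2 z') = z'")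
      case True2: True
      show ?thesis using True True2 eq by metis
    next
      case False
      hence "p (f2 z') = f1 z'" using pf2[OF z'] by blast
      hence "z = f1 z'" using eq True by metis
      thus ?thesis using hZ[OF z] fprops(2)[OF z'] by metis
    qed
  next
    case False
    hence a: "p (f2 z) = f1 z" using pf2[OF z] by blast
    show ?thesis
    proof (cases "p (f2 z') = z'")
      case True2: True
      hence "z' = f1 z" using eq a by metis
      thus ?thesis using hZ[OF z'] fprops(2)[OF z] by metis
    next
      case False2: False
      hence "p (f2 z') = f1 z'" using pf2[OF z'] by blast
      hence "f1 z = f1 z'" using eq a by metis
      thus ?thesis using inj1 z z' by (meson inj_onD)
    qed
  qed
qed
end

context tree_ctx begin
lemma d1: "Z \<inter> f1 ` Z = {}"
proof -
  { fix x assume "x \<in> Z" "x \<in> f1 ` Z"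
    then obtain z where "z \<in> Z" "x = f1 z" by blast
    hence False using hZ[OF \<open>x \<in> Z\<close>] fprops(2)[OF \<open>z \<in> Z\<close>] by simp }
  thus ?thesis by blast
qed

lemma d2: "Z \<inter> f2 ` Z = {}"
proof -
  { fix x assume "x \<in> Z" "x \<in> f2 ` Z"
    then obtain z where "z \<in> Z" "x = f2 z" by blast
    hence False using hZ[OF \<open>x \<in> Z\<close>] fprops(3)[OF \<open>z \<in> Z\<close>] by simp }
  thus ?thesis by blast
qed

lemma d3: "f1 ` Z \<inter> f2 ` Z = {}"
proof (rule ccontr)
  assume "f1 ` Z \<inter> f2 ` Z \<noteq> {}"
  then obtain z z' where z: "z \<in> Z" and z': "z' \<in> Z" and eq: "f1 z = f2 z'" by blast
  from fprops(6)[OF z'] show False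
  proof
    assume "f2 z' \<in> ch z' \<and> f2 z' \<noteq> f1 z'"
    hence "p (f2 z') = z'" "f2 z' \<noteq> f1 z'" unfolding ch_def by auto
    thus False using eq pf1[OF z] by metis
  next
    assume "f2 z' \<in> ch (f1 z')"
    hence "p (f2 z') = f1 z'" unfolding ch_def by auto
    hence "z = f1 z'" using eq pf1[OF z] by metis
    thus False using hZ[OF z] fprops(2)[OF z'] by simp
  qed
qed

lemma subZ: "Z \<union> f1 ` Z \<union> f2 ` Z \<subseteq> {1..<n}"
proof
  fix x assume "x \<in> Z \<union> f1 ` Z \<union> f2 ` Z"
  then consider "x \<in> Z" | z where "z \<in> Z" "x = f1 z" | z where "z \<in> Z" "x = f2 z" by blast
  thus "x \<in> {1..<n}"
  proof cases
    case 1 thus ?thesis unfolding Z_def heavy_def by auto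
  next
    case 2 thus ?thesis using fprops(1)[OF 2(1)] unfolding ch_def by auto
  next
    case 3 thus ?thesis using fprops(4,5)[OF 3(1)] by auto
  qed
qed

lemma card_Z: "3 * card Z \<le> n - 1"
proof -
  have c1: "card (Z \<union> f1 ` Z) = card Z + card Z"
    using card_Un_disjoint[OF Z_fin finite_imageI[OF Z_fin] d1] card_image[OF inj1] by simp
  have dj: "(Z \<union> f1 ` Z) \<inter> f2 ` Z = {}" using d2 d3 by blast
  have "card (Z \<union> f1 ` Z \<union> f2 ` Z) = card (Z \<union> f1 ` Z) + card (f2 ` Z)"
    by (rule card_Un_disjoint[OF _ finite_imageI[OF Z_fin] dj]) (simp add: Z_fin)
  hence "card (Z \<union> f1 ` Z \<union> f2 ` Z) = card Z + card Z + card Z"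
    using c1 card_image[OF inj2] by simp
  moreover have "card (Z \<union> f1 ` Z \<union> f2 ` Z) \<le> n - 1"
    using card_mono[OF _ subZ] by simp
  ultimately show ?thesis by simp
qed

end

context tree_ctx begin

lemma R_sub: "R \<subseteq> {0..<n}"
  unfolding R_def Hv_def heavy_def using npos by auto

lemma lap_entry: "u < n \<Longrightarrow> j < n \<Longrightarrow> laplacian n E $$ (u, j) =
   real (if u = j then Defs.degree n E u else 0) - (if E u j then 1 else 0)"
  unfolding laplacian_def by simp

lemma lap_carrier: "laplacian n E \<in> carrier_mat n n"
  unfolding laplacian_def by (rule minus_carrier_mat) simp

lemma lap_sym: "i < n \<Longrightarrow> j < n \<Longrightarrow> laplacian n E $$ (i, j) = laplacian n E $$ (j, i)"
  using lap_entry E_sym by auto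

lemma deg_N: "Defs.degree n E u = card (N u)"
  unfolding Defs.degree_def N_def by (rule arg_cong[where f = card]) auto

lemma lap_row:
  fixes v :: "complex vec"
  assumes u: "u < n"
  shows "(\<Sum>j=0..<n. complex_of_real (laplacian n E $$ (u, j)) * v $ j)
     = of_nat (card (N u)) * v $ u - (\<Sum>j\<in>N u. v $ j)"
proof -
  have s1: "(\<Sum>j=0..<n. complex_of_real (laplacian n E $$ (u, j)) * v $ j)
      = (\<Sum>j=0..<n. (if u = j then of_nat (Defs.degree n E u) * v $ j else 0) - (if E u j then v $ j else 0))"
    using u by (intro sum.cong refl) (auto simp: lap_entry algebra_simps)
  have s2: "(\<Sum>j=0..<n. (if u = j then of_nat (Defs.degree n E u) * v $ j else 0) - (if E u j then v $ j else 0))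
     = (\<Sum>j=0..<n. (if u = j then of_nat (Defs.degree n E u) * v $ j else 0)) - (\<Sum>j=0..<n. (if E u j then v $ j else 0))"
    by (rule sum_subtractf)
  have s3: "(\<Sum>j=0..<n. (if u = j then of_nat (Defs.degree n E u) * v $ j else 0)) = of_nat (Defs.degree n E u) * v $ u"
    using u by (simp add: sum.delta)
  have s4: "(\<Sum>j=0..<n. (if E u j then v $ j else 0)) = (\<Sum>j\<in>N u. v $ j)"
    unfolding N_def by (simp add: sum.If_cases Int_def conj_commute)
  have s5: "of_nat (Defs.degree n E u) = (of_nat (card (N u)) :: complex)" by (simp only: deg_N)
  have "(\<Sum>j=0..<n. complex_of_real (laplacian n E $$ (u, j)) * v $ j)
      = (\<Sum>j=0..<n. (if u = j then of_nat (Defs.degree n E u) * v $ j else 0)) - (\<Sum>j=0..<n. (if E u j then v $ j else 0))"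
    by (simp only: s1 s2)
  also have "\<dots> = of_nat (Defs.degree n E u) * v $ u - (\<Sum>j\<in>N u. v $ j)"
    by (simp only: s3 s4)
  also have "\<dots> = of_nat (card (N u)) * v $ u - (\<Sum>j\<in>N u. v $ j)"
    by (simp only: s5)
  finally show ?thesis .
qed

lemma kdim_bound:
  fixes \<mu> :: real
  assumes m1: "\<mu> \<noteq> 1" and m2: "\<mu>^2 - 3*\<mu> + 1 \<noteq> 0"
  shows "kernel_dim (char_matrix (map_mat complex_of_real (laplacian n E)) (complex_of_real \<mu>)) \<le> card R"
proof -
  define C where "C = char_matrix (map_mat complex_of_real (laplacian n E)) (complex_of_real \<mu>)"
  have C: "C \<in> carrier_mat n n" unfolding C_def using lap_carrier by simp
  have Cij: "\<And>i j. i < n \<Longrightarrow> j < n \<Longrightarrow> C $$ (i,j) = complex_of_real (laplacian n E $$ (i,j)) - (if i = j then complex_of_real \<mu> else 0)"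
    unfolding C_def char_matrix_def using lap_carrier by auto
  have mc1: "complex_of_real \<mu> \<noteq> 1" using m1 by simp
  have mc2: "(complex_of_real \<mu>)^2 - 3 * complex_of_real \<mu> + 1 \<noteq> 0"
  proof
    assume "(complex_of_real \<mu>)^2 - 3 * complex_of_real \<mu> + 1 = 0"
    hence "complex_of_real (\<mu>^2 - 3*\<mu> + 1) = 0" by simp
    thus False using m2 by (simp only: of_real_eq_0_iff)
  qed
  show ?thesis unfolding C_def[symmetric]
  proof (rule kernel_dim_le_card[OF C R_sub])
    fix v assume v: "v \<in> carrier_vec n" and Cv: "C *\<^sub>v v = 0\<^sub>v n" and vR: "\<forall>i\<in>R. v $ i = 0"
    have eq: "\<And>u. u < n \<Longrightarrow> of_nat (card (N u)) * v $ u - (\<Sum>j\<in>N u. v $ j) = complex_of_real \<mu> * v $ u"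
    proof -
      fix u assume u: "u < n"
      have "0 = (C *\<^sub>v v) $ u" using Cv u by simp
      also have "\<dots> = (\<Sum>j=0..<n. C $$ (u,j) * v $ j)" using C v u by (simp add: scalar_prod_def)
      also have "\<dots> = (\<Sum>j=0..<n. complex_of_real (laplacian n E $$ (u, j)) * v $ j - (if u = j then complex_of_real \<mu> * v $ j else 0))"
      proof (rule sum.cong[OF refl])
        fix j assume j: "j \<in> {0..<n}"
        have "C $$ (u,j) = complex_of_real (laplacian n E $$ (u, j)) - (if u = j then complex_of_real \<mu> else 0)"
          using Cij u j by simp
        thus "C $$ (u,j) * v $ j = complex_of_real (laplacian n E $$ (u, j)) * v $ j - (if u = j then complex_of_real \<mu> * v $ j else 0)"
          by (simp add: left_diff_distrib)
      qed
      also have "\<dots> = (\<Sum>j=0..<n. complex_of_real (laplacian n E $$ (u, j)) * v $ j) - complex_of_real \<mu> * v $ u"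
        using u by (simp add: sum_subtractf sum.delta)
      also have "\<dots> = of_nat (card (N u)) * v $ u - (\<Sum>j\<in>N u. v $ j) - complex_of_real \<mu> * v $ u"
        using lap_row[OF u] by simp
      finally show "of_nat (card (N u)) * v $ u - (\<Sum>j\<in>N u. v $ j) = complex_of_real \<mu> * v $ u"
        by (simp add: algebra_simps)
    qed
    have "\<And>x. x < n \<Longrightarrow> v $ x = 0"
      by (rule forcing[of "\<lambda>i. v $ i", OF eq mc1 mc2]) (use vR in auto)
    thus "v = 0\<^sub>v n" using v by (intro eq_vecI) auto
  qed
qed

end

lemma golden:
  fixes \<mu> :: real
  assumes "\<mu>^2 - 3*\<mu> + 1 = 0"
  shows "\<mu> = (3 + sqrt 5) / 2 \<or> \<mu> = (3 - sqrt 5) / 2"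
proof -
  have s: "sqrt 5 * sqrt 5 = 5" by simp
  have "(\<mu> - (3 + sqrt 5) / 2) * (\<mu> - (3 - sqrt 5) / 2) = \<mu>^2 - 3*\<mu> + (9 - sqrt 5 * sqrt 5) / 4"
    by (simp add: algebra_simps power2_eq_square add_divide_distrib diff_divide_distrib)
  also have "\<dots> = \<mu>^2 - 3*\<mu> + 1" using s by simp
  finally have "(\<mu> - (3 + sqrt 5) / 2) * (\<mu> - (3 - sqrt 5) / 2) = 0" using assms by simp
  thus ?thesis by simp
qed

theorem lemma4p3:
  fixes j n :: nat and E :: "nat \<Rightarrow> nat \<Rightarrow> bool" and \<mu> :: real
  assumes "j \<ge> 2"
    and "is_tree n E"
    and "n > 10 * j"
    and "eigenvalue (laplacian n E) \<mu>"
    and "\<mu> \<noteq> 1"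
    and "lap_mult n E \<mu> = n div 2 - j"
  shows "\<mu> = (3 + sqrt 5) / 2 \<or> \<mu> = (3 - sqrt 5) / 2"
proof (rule ccontr)
  assume neg: "\<not> ?thesis"
  hence m2: "\<mu>^2 - 3*\<mu> + 1 \<noteq> 0" using golden by blast
  have npos: "0 < n" using assms(1,3) by simp
  interpret T: tree_ctx n E using assms(2) npos by unfold_locales
  have A: "laplacian n E \<in> carrier_mat n n" by (rule T.lap_carrier)
  have "lap_mult n E \<mu> = Polynomial.order \<mu> (char_poly (laplacian n E))"
    unfolding lap_mult_def ..
  also have "\<dots> \<le> kernel_dim (char_matrix (map_mat complex_of_real (laplacian n E)) (complex_of_real \<mu>))"
    by (rule order_le_kernel_dim[OF A T.lap_sym])
  also have "\<dots> \<le> card T.R" by (rule T.kdim_bound[OF assms(5) m2])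
  also have "\<dots> \<le> Suc (card T.Z)" by (rule T.card_R)
  finally have m: "n div 2 - j \<le> Suc (card T.Z)" using assms(6) by simp
  have z: "3 * card T.Z \<le> n - 1" by (rule T.card_Z)
  have h1: "n div 2 \<le> card T.Z + 1 + j" using m by linarith
  have h2: "n \<le> 2 * (n div 2) + 1" by linarith
  have h3: "3 * card T.Z + 1 \<le> n" using z npos by linarith
  show False using h1 h2 h3 assms(1,3) by linarith
qed

end
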